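(* Let $(H,B_1,B_2)$ be a Rota-Baxter system of Hopf algebras, $A$ a unital commutative algebra, and $\mathcal{B}_1,\mathcal{B}_2:\mathrm{Char}(H,A)\to\mathrm{Char}(H_{B_1,B_2},A)$ given by $\mathcal{B}_i(f)(a)=f(B_i(a))$, $a\in H_1$. The Cayley transform $\Theta:\operatorname{Im}(\mathcal{B}_1)/\mathcal{B}_1(\ker\mathcal{B}_2)\to\operatorname{Im}(\mathcal{B}_2)/\mathcal{B}_2(\ker\mathcal{B}_1)$, $\Theta(\overline{\mathcal{B}_1(f)})=\overline{\mathcal{B}_2(f)}$ for $f\in\mathrm{Char}(H,A)$, is a group isomorphism.
   Context: $\mathbb{F}$ is a field of characteristic $0$; Sweedler notation $\Delta(a)=a_1\otimes a_2$. A Rota-Baxter system of Hopf algebras is a triple $(H,B_1,B_2)$ with $(H,\cdot,1,\Delta,\epsilon,S)$ a cocommutative Hopf algebra, $B_1,B_2$ coalgebra homomorphisms with $B_1(1)=B_2(1)=1$, and for all $a,b\in H$: $B_1(a)B_1(b)=B_1(B_1(a_1)bS(B_2(a_2)))$, $B_2(a)B_2(b)=B_2(B_1(a_1)bS(B_2(a_2)))$. Descendent operation $a\circ b=B_1(a_1)bS(B_2(a_2))$, cocycle $\sigma(a)=B_1(a_1)S(B_2(a_2))$, $H_1=\operatorname{Im}(\sigma)$; $H_{B_1,B_2}$ is the Hopf algebra $H_1$ with product $\circ$, unit $1$, restricted $\Delta,\epsilon$, antipode $T(a)=S(B_1(a_1))B_2(a_2)$. Convolution: $(f\ast g)(a)=f(a_1)g(a_2)$.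 $\mathrm{Char}(H,A)$ is the group under $\ast$ of algebra homomorphisms $H\to A$; $\mathrm{Char}(H_{B_1,B_2},A)$ is the group under convolution (w.r.t. the coproduct of $H_1$) of algebra homomorphisms $(H_1,\circ,1)\to A$. The subgroups $\mathcal{B}_1(\ker\mathcal{B}_2)\trianglelefteq\operatorname{Im}(\mathcal{B}_1)$ and $\mathcal{B}_2(\ker\mathcal{B}_1)\trianglelefteq\operatorname{Im}(\mathcal{B}_2)$ are normal, and bars denote cosets. *)

theory Defs
  imports Complex_Main "HOL-Algebra.Coset"
begin

text \<open>An element of H \<otimes> H (resp. H \<otimes> H \<otimes> H) is represented by a finite list of
  pairs (triples) of simple tensors.  Two representations denote the same tensor
  iff they agree under every bilinear (trilinear) functional H \<times> H \<rightarrow> F.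
  This is exactly equality in the algebraic tensor product over the field F.\<close>

definition bilin :: "('k::field \<Rightarrow> 'h::ab_group_add \<Rightarrow> 'h) \<Rightarrow> ('h \<Rightarrow> 'h \<Rightarrow> 'k) \<Rightarrow> bool" where
  "bilin sc \<beta> \<longleftrightarrow> (\<forall>x. Vector_Spaces.linear sc (*) (\<beta> x)) \<and>
                    (\<forall>y. Vector_Spaces.linear sc (*) (\<lambda>x. \<beta> x y))"

definition trilin :: "('k::field \<Rightarrow> 'h::ab_group_add \<Rightarrow> 'h) \<Rightarrow> ('h \<Rightarrow> 'h \<Rightarrow> 'h \<Rightarrow> 'k) \<Rightarrow> bool" where
  "trilin sc \<tau> \<longleftrightarrow> (\<forall>x y. Vector_Spaces.linear sc (*) (\<tau> x y)) \<and>
                    (\<forall>x z. Vector_Spaces.linear sc (*) (\<lambda>y. \<tau> x y z)) \<and>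
                    (\<forall>y z. Vector_Spaces.linear sc (*) (\<lambda>x. \<tau> x y z))"

definition teq2 :: "('k::field \<Rightarrow> 'h::ab_group_add \<Rightarrow> 'h) \<Rightarrow> ('h \<times> 'h) list \<Rightarrow> ('h \<times> 'h) list \<Rightarrow> bool" where
  "teq2 sc xs ys \<longleftrightarrow> (\<forall>\<beta>. bilin sc \<beta> \<longrightarrow>
       (\<Sum>(a,b)\<leftarrow>xs. \<beta> a b) = (\<Sum>(a,b)\<leftarrow>ys. \<beta> a b))"

text \<open>H is the type 'h with its ring structure (product, unit), an F-vector space
  structure sc compatible with the product, comultiplication cm (Sweedler
  representation of \<Delta>), counit eps, antipode ant.\<close>

definition cocomm_hopf ::
  "('k::field \<Rightarrow> 'h::ring_1 \<Rightarrow> 'h) \<Rightarrow> ('h \<Rightarrow> ('h \<times> 'h) list) \<Rightarrow> ('h \<Rightarrow> 'k) \<Rightarrow> ('h \<Rightarrow> 'h) \<Rightarrow> bool" where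
  "cocomm_hopf sc cm eps ant \<longleftrightarrow>
     vector_space sc \<and>
     (\<forall>c x y. sc c (x * y) = sc c x * y \<and> sc c (x * y) = x * sc c y) \<and>
     \<comment> \<open>\<Delta> linear\<close>
     (\<forall>c x y. teq2 sc (cm (sc c x + y)) (map (\<lambda>(a,b). (sc c a, b)) (cm x) @ cm y)) \<and>
     \<comment> \<open>coassociativity\<close>
     (\<forall>x \<tau>. trilin sc \<tau> \<longrightarrow>
        (\<Sum>(a,b)\<leftarrow>cm x. \<Sum>(c,d)\<leftarrow>cm a. \<tau> c d b) = (\<Sum>(a,b)\<leftarrow>cm x. \<Sum>(c,d)\<leftarrow>cm b. \<tau> a c d)) \<and>
     \<comment> \<open>counit\<close>
     Vector_Spaces.linear sc (*) eps \<and>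
     (\<forall>x. (\<Sum>(a,b)\<leftarrow>cm x. sc (eps a) b) = x \<and> (\<Sum>(a,b)\<leftarrow>cm x. sc (eps b) a) = x) \<and>
     \<comment> \<open>\<Delta> and \<epsilon> are algebra maps\<close>
     (\<forall>x y. teq2 sc (cm (x * y)) (concat (map (\<lambda>(a,b). map (\<lambda>(c,d). (a * c, b * d)) (cm y)) (cm x)))) \<and>
     teq2 sc (cm 1) [(1,1)] \<and>
     (\<forall>x y. eps (x * y) = eps x * eps y) \<and> eps 1 = 1 \<and>
     \<comment> \<open>antipode\<close>
     Vector_Spaces.linear sc sc ant \<and>
     (\<forall>x. (\<Sum>(a,b)\<leftarrow>cm x. ant a * b) = sc (eps x) 1 \<and> (\<Sum>(a,b)\<leftarrow>cm x. a * ant b) = sc (eps x) 1) \<and>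
     \<comment> \<open>cocommutativity\<close>
     (\<forall>x. teq2 sc (cm x) (map (\<lambda>(a,b). (b,a)) (cm x)))"

definition coalg_hom ::
  "('k::field \<Rightarrow> 'h::ring_1 \<Rightarrow> 'h) \<Rightarrow> ('h \<Rightarrow> ('h \<times> 'h) list) \<Rightarrow> ('h \<Rightarrow> 'k) \<Rightarrow> ('h \<Rightarrow> 'h) \<Rightarrow> bool" where
  "coalg_hom sc cm eps B \<longleftrightarrow> Vector_Spaces.linear sc sc B \<and>
     (\<forall>x. teq2 sc (cm (B x)) (map (\<lambda>(a,b). (B a, B b)) (cm x))) \<and>
     (\<forall>x. eps (B x) = eps x)"

definition rb_circ :: "('h::ring_1 \<Rightarrow> ('h \<times> 'h) list) \<Rightarrow> ('h \<Rightarrow> 'h) \<Rightarrow> ('h \<Rightarrow> 'h) \<Rightarrow> ('h \<Rightarrow> 'h) \<Rightarrow> 'h \<Rightarrow> 'h \<Rightarrow> 'h" where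
  "rb_circ cm ant B1 B2 a b = (\<Sum>(x,y)\<leftarrow>cm a. B1 x * b * ant (B2 y))"

definition rb_sigma :: "('h::ring_1 \<Rightarrow> ('h \<times> 'h) list) \<Rightarrow> ('h \<Rightarrow> 'h) \<Rightarrow> ('h \<Rightarrow> 'h) \<Rightarrow> ('h \<Rightarrow> 'h) \<Rightarrow> 'h \<Rightarrow> 'h" where
  "rb_sigma cm ant B1 B2 a = (\<Sum>(x,y)\<leftarrow>cm a. B1 x * ant (B2 y))"

definition rb_H1 :: "('h::ring_1 \<Rightarrow> ('h \<times> 'h) list) \<Rightarrow> ('h \<Rightarrow> 'h) \<Rightarrow> ('h \<Rightarrow> 'h) \<Rightarrow> ('h \<Rightarrow> 'h) \<Rightarrow> 'h set" where
  "rb_H1 cm ant B1 B2 = range (rb_sigma cm ant B1 B2)"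

definition rb_system ::
  "('k::field_char_0 \<Rightarrow> 'h::ring_1 \<Rightarrow> 'h) \<Rightarrow> ('h \<Rightarrow> ('h \<times> 'h) list) \<Rightarrow> ('h \<Rightarrow> 'k) \<Rightarrow> ('h \<Rightarrow> 'h)
     \<Rightarrow> ('h \<Rightarrow> 'h) \<Rightarrow> ('h \<Rightarrow> 'h) \<Rightarrow> bool" where
  "rb_system sc cm eps ant B1 B2 \<longleftrightarrow> cocomm_hopf sc cm eps ant \<and>
     coalg_hom sc cm eps B1 \<and> coalg_hom sc cm eps B2 \<and> B1 1 = 1 \<and> B2 1 = 1 \<and>
     (\<forall>a b. B1 a * B1 b = B1 (rb_circ cm ant B1 B2 a b)) \<and>
     (\<forall>a b. B2 a * B2 b = B2 (rb_circ cm ant B1 B2 a b))"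

definition comm_algebra :: "('k::field \<Rightarrow> 'a::comm_ring_1 \<Rightarrow> 'a) \<Rightarrow> bool" where
  "comm_algebra scA \<longleftrightarrow> vector_space scA \<and> (\<forall>c x y. scA c (x * y) = scA c x * y)"

definition charH :: "('k::field \<Rightarrow> 'h::ring_1 \<Rightarrow> 'h) \<Rightarrow> ('k \<Rightarrow> 'a::comm_ring_1 \<Rightarrow> 'a) \<Rightarrow> ('h \<Rightarrow> 'a) set" where
  "charH sc scA = {f. Vector_Spaces.linear sc scA f \<and> (\<forall>x y. f (x * y) = f x * f y) \<and> f 1 = 1}"

definition CharH_grp ::
  "('k::field \<Rightarrow> 'h::ring_1 \<Rightarrow> 'h) \<Rightarrow> ('h \<Rightarrow> ('h \<times> 'h) list) \<Rightarrow> ('h \<Rightarrow> 'k)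
     \<Rightarrow> ('k \<Rightarrow> 'a::comm_ring_1 \<Rightarrow> 'a) \<Rightarrow> ('h \<Rightarrow> 'a) monoid" where
  "CharH_grp sc cm eps scA =
     \<lparr>carrier = charH sc scA,
      mult = (\<lambda>f g a. \<Sum>(x,y)\<leftarrow>cm a. f x * g y),
      one = (\<lambda>a. scA (eps a) 1)\<rparr>"

text \<open>The coproduct of H_1 = Im(sigma): a Sweedler representation of \<Delta>(a) whose
  tensor factors lie in H_1 (such a representation exists since H_1 is a
  subcoalgebra; the resulting convolution does not depend on the choice).\<close>

definition rb_cm1 ::
  "('k::field_char_0 \<Rightarrow> 'h::ring_1 \<Rightarrow> 'h) \<Rightarrow> ('h \<Rightarrow> ('h \<times> 'h) list) \<Rightarrow> ('h \<Rightarrow> 'h)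
     \<Rightarrow> ('h \<Rightarrow> 'h) \<Rightarrow> ('h \<Rightarrow> 'h) \<Rightarrow> 'h \<Rightarrow> ('h \<times> 'h) list" where
  "rb_cm1 sc cm ant B1 B2 a =
     (SOME xs. set xs \<subseteq> rb_H1 cm ant B1 B2 \<times> rb_H1 cm ant B1 B2 \<and> teq2 sc xs (cm a))"

text \<open>Char(H_{B1,B2},A): algebra homomorphisms (H_1, circ, 1) \<rightarrow> A.  They are
  represented as functions on 'h that vanish outside H_1 (so that equality of
  characters is equality on H_1).\<close>

definition charH1 ::
  "('k::field_char_0 \<Rightarrow> 'h::ring_1 \<Rightarrow> 'h) \<Rightarrow> ('h \<Rightarrow> ('h \<times> 'h) list) \<Rightarrow> ('h \<Rightarrow> 'h)
     \<Rightarrow> ('h \<Rightarrow> 'h) \<Rightarrow> ('h \<Rightarrow> 'h) \<Rightarrow> ('k \<Rightarrow> 'a::comm_ring_1 \<Rightarrow> 'a) \<Rightarrow> ('h \<Rightarrow> 'a) set" where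
  "charH1 sc cm ant B1 B2 scA =
     {f. (\<forall>a. a \<notin> rb_H1 cm ant B1 B2 \<longrightarrow> f a = 0) \<and>
         (\<forall>c x y. x \<in> rb_H1 cm ant B1 B2 \<longrightarrow> y \<in> rb_H1 cm ant B1 B2 \<longrightarrow>
              f (sc c x + y) = scA c (f x) + f y) \<and>
         (\<forall>x y. x \<in> rb_H1 cm ant B1 B2 \<longrightarrow> y \<in> rb_H1 cm ant B1 B2 \<longrightarrow>
              f (rb_circ cm ant B1 B2 x y) = f x * f y) \<and>
         f 1 = 1}"

definition CharH1_grp ::
  "('k::field_char_0 \<Rightarrow> 'h::ring_1 \<Rightarrow> 'h) \<Rightarrow> ('h \<Rightarrow> ('h \<times> 'h) list) \<Rightarrow> ('h \<Rightarrow> 'k) \<Rightarrow> ('h \<Rightarrow> 'h)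
     \<Rightarrow> ('h \<Rightarrow> 'h) \<Rightarrow> ('h \<Rightarrow> 'h) \<Rightarrow> ('k \<Rightarrow> 'a::comm_ring_1 \<Rightarrow> 'a) \<Rightarrow> ('h \<Rightarrow> 'a) monoid" where
  "CharH1_grp sc cm eps ant B1 B2 scA =
     \<lparr>carrier = charH1 sc cm ant B1 B2 scA,
      mult = (\<lambda>f g a. if a \<in> rb_H1 cm ant B1 B2
                       then (\<Sum>(x,y)\<leftarrow>rb_cm1 sc cm ant B1 B2 a. f x * g y) else 0),
      one = (\<lambda>a. if a \<in> rb_H1 cm ant B1 B2 then scA (eps a) 1 else 0)\<rparr>"

definition calB ::
  "('h::ring_1 \<Rightarrow> ('h \<times> 'h) list) \<Rightarrow> ('h \<Rightarrow> 'h) \<Rightarrow> ('h \<Rightarrow> 'h) \<Rightarrow> ('h \<Rightarrow> 'h) \<Rightarrow> ('h \<Rightarrow> 'h)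
     \<Rightarrow> ('h \<Rightarrow> 'a::comm_ring_1) \<Rightarrow> ('h \<Rightarrow> 'a)" where
  "calB cm ant B1 B2 Bi f = (\<lambda>a. if a \<in> rb_H1 cm ant B1 B2 then f (Bi a) else 0)"

end

theory Submission
  imports Defs
begin


definition lin :: "('k::field \<Rightarrow> 'b::ab_group_add \<Rightarrow> 'b) \<Rightarrow> ('k \<Rightarrow> 'c::ab_group_add \<Rightarrow> 'c) \<Rightarrow> ('b \<Rightarrow> 'c) \<Rightarrow> bool" where
  "lin s1 s2 f \<longleftrightarrow> (\<forall>x y. f (x + y) = f x + f y) \<and> (\<forall>c x. f (s1 c x) = s2 c (f x))"

lemma linear_lin: "Vector_Spaces.linear s1 s2 f \<longleftrightarrow> vector_space s1 \<and> vector_space s2 \<and> lin s1 s2 f"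
  unfolding linear_iff_module_hom module_hom_iff module_iff_vector_space lin_def by auto

lemma lin_add: "lin s1 s2 f \<Longrightarrow> f (x + y) = f x + f y" by (simp add: lin_def)
lemma lin_scale: "lin s1 s2 f \<Longrightarrow> f (s1 c x) = s2 c (f x)" by (simp add: lin_def)
lemma lin_zero: "lin s1 s2 f \<Longrightarrow> f 0 = 0"
  by (metis add_cancel_right_right add_0 lin_add)

lemma lin_sum_list: "lin s1 s2 f \<Longrightarrow> f (sum_list (map g xs)) = sum_list (map (\<lambda>x. f (g x)) xs)"
  by (induction xs) (auto simp: lin_zero lin_add)

lemma lin_comp: "lin s1 s2 f \<Longrightarrow> lin s2 s3 g \<Longrightarrow> lin s1 s3 (\<lambda>x. g (f x))"
  by (simp add: lin_def)

lemma vs_scale0: "vector_space s \<Longrightarrow> s c 0 = 0"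
  by (metis module.scale_zero_right module_iff_vector_space)

lemma lin_sum_list_fun: "(\<And>x. x \<in> set xs \<Longrightarrow> lin s1 s2 (\<lambda>v. g v x)) \<Longrightarrow> vector_space s2 \<Longrightarrow>
   lin s1 s2 (\<lambda>v. sum_list (map (g v) xs))"
proof (induction xs)
  case Nil then show ?case by (simp add: lin_def vs_scale0)
next
  case (Cons a xs)
  then have "lin s1 s2 (\<lambda>v. sum_list (map (g v) xs))" "lin s1 s2 (\<lambda>v. g v a)" by auto
  then show ?case using Cons.prems(2) by (simp add: lin_def vector_space.vector_space_assms(1) algebra_simps)
qed

lemma lin_sum_list_fun2: "(\<And>a b. (a,b) \<in> set xs \<Longrightarrow> lin s1 s2 (\<lambda>v. g v a b)) \<Longrightarrow> vector_space s2 \<Longrightarrow>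
   lin s1 s2 (\<lambda>v. \<Sum>(a,b)\<leftarrow>xs. g v a b)"
  using lin_sum_list_fun[of xs s1 s2 "\<lambda>v. case_prod (g v)"] by (auto simp: split_def)

lemma vs_field: "vector_space ((*) :: 'k::field \<Rightarrow> 'k \<Rightarrow> 'k)"
  by (unfold_locales) (auto simp: algebra_simps)

lemma separate:
  assumes vs: "vector_space s" and ne: "u \<noteq> w"
  shows "\<exists>\<phi>. lin s ((*)::'k::field\<Rightarrow>'k\<Rightarrow>'k) \<phi> \<and> \<phi> u \<noteq> \<phi> w"
proof -
  interpret vp: vector_space_pair s "(*)::'k\<Rightarrow>'k\<Rightarrow>'k" using vs vs_field
    by (simp add: vector_space_pair_def)
  have "u - w \<noteq> 0" using ne by simp
  then have "vp.vs1.independent {u - w}" by simp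
  from vp.linear_independent_extend[OF this, of "\<lambda>_. 1"]
  obtain g where g: "Vector_Spaces.linear s (*) g" "g (u - w) = 1" by auto
  then have l: "lin s (*) g" by (simp add: linear_lin)
  have "g (u - w) = g u - g w"
    using lin_add[OF l, of "u - w" w] by simp
  with g l show ?thesis by (intro exI[of _ g]) auto
qed

lemma separate':
  assumes "vector_space s" "\<And>\<phi>. lin s ((*)::'k::field\<Rightarrow>'k\<Rightarrow>'k) \<phi> \<Longrightarrow> \<phi> u = \<phi> w"
  shows "u = w"
  using separate[OF assms(1)] assms(2) by blast

definition bl :: "('k::field \<Rightarrow> 'h::ab_group_add \<Rightarrow> 'h) \<Rightarrow> ('k \<Rightarrow> 'v::ab_group_add \<Rightarrow> 'v) \<Rightarrow> ('h \<Rightarrow> 'h \<Rightarrow> 'v) \<Rightarrow> bool" where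
  "bl s sV F \<longleftrightarrow> (\<forall>a. lin s sV (F a)) \<and> (\<forall>b. lin s sV (\<lambda>a. F a b))"

definition tl3 :: "('k::field \<Rightarrow> 'h::ab_group_add \<Rightarrow> 'h) \<Rightarrow> ('k \<Rightarrow> 'v::ab_group_add \<Rightarrow> 'v) \<Rightarrow> ('h \<Rightarrow> 'h \<Rightarrow> 'h \<Rightarrow> 'v) \<Rightarrow> bool" where
  "tl3 s sV F \<longleftrightarrow> (\<forall>a b. lin s sV (F a b)) \<and> (\<forall>a c. lin s sV (\<lambda>b. F a b c)) \<and> (\<forall>b c. lin s sV (\<lambda>a. F a b c))"

lemma bilin_bl: "vector_space s \<Longrightarrow> bilin s \<beta> \<longleftrightarrow> bl s (*) \<beta>"
  by (simp add: bilin_def bl_def linear_lin vs_field)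

lemma trilin_tl3: "vector_space s \<Longrightarrow> trilin s \<beta> \<longleftrightarrow> tl3 s (*) \<beta>"
  by (simp add: trilin_def tl3_def linear_lin vs_field)

lemma transfer2:
  fixes s :: "'k::field \<Rightarrow> 'h::ab_group_add \<Rightarrow> 'h" and sV :: "'k \<Rightarrow> 'v::ab_group_add \<Rightarrow> 'v"
  assumes vs: "vector_space s" and vV: "vector_space sV" and eq: "teq2 s xs ys" and F: "bl s sV F"
  shows "(\<Sum>(a,b)\<leftarrow>xs. F a b) = (\<Sum>(a,b)\<leftarrow>ys. F a b)"
proof (rule separate'[OF vV])
  fix \<phi> :: "'v \<Rightarrow> 'k" assume \<phi>: "lin sV (*) \<phi>"
  have "bl s (*) (\<lambda>a b. \<phi> (F a b))"
    using F \<phi> by (auto simp: bl_def intro: lin_comp)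
  then have "bilin s (\<lambda>a b. \<phi> (F a b))" using vs by (simp add: bilin_bl)
  with eq have "(\<Sum>(a,b)\<leftarrow>xs. \<phi> (F a b)) = (\<Sum>(a,b)\<leftarrow>ys. \<phi> (F a b))"
    by (simp add: teq2_def)
  then show "\<phi> (\<Sum>(a,b)\<leftarrow>xs. F a b) = \<phi> (\<Sum>(a,b)\<leftarrow>ys. F a b)"
    by (simp add: lin_sum_list[OF \<phi>] split_def)
qed



lemma sum_list_concat_map: "sum_list (map f (concat (map g xs))) = sum_list (map (\<lambda>x. sum_list (map f (g x))) xs)"
  by (induction xs) auto

lemma vs_distrib: "vector_space s \<Longrightarrow> s c (x + y) = s c x + s c y"
  by (rule vector_space.vector_space_assms(1))
lemma vs_distrib2: "vector_space s \<Longrightarrow> s (c + d) x = s c x + s d x"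
  by (rule vector_space.vector_space_assms(2))
lemma vs_assoc: "vector_space s \<Longrightarrow> s c (s d x) = s (c * d) x"
  by (rule vector_space.vector_space_assms(3))
lemma vs_one: "vector_space s \<Longrightarrow> s 1 x = x"
  by (rule vector_space.vector_space_assms(4))

lemma lin_id: "lin s s (\<lambda>x. x)" by (simp add: lin_def)

lemma lin_scaleV: "vector_space sV \<Longrightarrow> lin s sV f \<Longrightarrow> lin s sV (\<lambda>x. sV c (f x))"
  by (simp add: lin_def vs_distrib vs_assoc mult.commute)

lemma lin_addf: "lin s sV f \<Longrightarrow> lin s sV g \<Longrightarrow> vector_space sV \<Longrightarrow> lin s sV (\<lambda>x. f x + g x)"
  by (simp add: lin_def vs_distrib algebra_simps)

locale CH =
  fixes sc :: "'k::field_char_0 \<Rightarrow> 'h::ring_1 \<Rightarrow> 'h"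
    and cm :: "'h \<Rightarrow> ('h \<times> 'h) list"
    and eps :: "'h \<Rightarrow> 'k"
    and ant :: "'h \<Rightarrow> 'h"
  assumes hopf: "cocomm_hopf sc cm eps ant"
begin

definition SW :: "('h \<Rightarrow> 'h \<Rightarrow> 'v::ab_group_add) \<Rightarrow> 'h \<Rightarrow> 'v" where
  "SW F x = (\<Sum>(a,b)\<leftarrow>cm x. F a b)"

lemma vs: "vector_space sc" using hopf unfolding cocomm_hopf_def by blast
lemma scm1: "sc c (x * y) = sc c x * y" using hopf unfolding cocomm_hopf_def by blast
lemma scm2: "sc c (x * y) = x * sc c y" using hopf unfolding cocomm_hopf_def by blast
lemma eps_lin: "lin sc (*) eps" using hopf by (simp add: cocomm_hopf_def linear_lin)
lemma ant_lin: "lin sc sc ant" using hopf by (simp add: cocomm_hopf_def linear_lin)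
lemma eps_mult: "eps (x * y) = eps x * eps y" using hopf unfolding cocomm_hopf_def by blast
lemma eps_one: "eps 1 = 1" using hopf unfolding cocomm_hopf_def by blast
lemma counit1: "SW (\<lambda>a b. sc (eps a) b) x = x" using hopf by (simp add: cocomm_hopf_def SW_def)
lemma counit2: "SW (\<lambda>a b. sc (eps b) a) x = x" using hopf by (simp add: cocomm_hopf_def SW_def)
lemma antipode1: "SW (\<lambda>a b. ant a * b) x = sc (eps x) 1" using hopf by (simp add: cocomm_hopf_def SW_def)
lemma antipode2: "SW (\<lambda>a b. a * ant b) x = sc (eps x) 1" using hopf by (simp add: cocomm_hopf_def SW_def)

lemma lin_mr: "lin sc sc (\<lambda>x. x * c)"
  by (simp add: lin_def distrib_right scm1)
lemma lin_ml: "lin sc sc (\<lambda>x. c * x)"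
  by (simp add: lin_def distrib_left scm2)

lemma SW_add_scale:
  assumes vV: "vector_space sV" and F: "bl sc sV F"
  shows "SW F (sc c x + y) = sV c (SW F x) + SW F y"
proof -
  have t: "teq2 sc (cm (sc c x + y)) (map (\<lambda>(a,b). (sc c a, b)) (cm x) @ cm y)"
    using hopf by (simp add: cocomm_hopf_def)
  have e: "\<And>a b. F (sc c a) b = sV c (F a b)" using F by (simp add: bl_def lin_def)
  have "SW F (sc c x + y) = (\<Sum>(a,b)\<leftarrow>map (\<lambda>(a,b). (sc c a, b)) (cm x) @ cm y. F a b)"
    unfolding SW_def by (rule transfer2[OF vs vV t F])
  also have "\<dots> = (\<Sum>(a,b)\<leftarrow>cm x. sV c (F a b)) + SW F y"
    by (simp add: SW_def e o_def split_def)
  also have "(\<Sum>(a,b)\<leftarrow>cm x. sV c (F a b)) = sV c (SW F x)"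
    unfolding SW_def
    using lin_sum_list[OF lin_scaleV[OF vV lin_id, of c], of "case_prod F" "cm x"]
    by (simp add: split_def)
  finally show ?thesis .
qed

lemma SW_lin:
  assumes vV: "vector_space sV" and F: "bl sc sV F"
  shows "lin sc sV (SW F)"
proof -
  have add: "SW F (x + y) = SW F x + SW F y" for x y
    using SW_add_scale[OF vV F, of 1 x y] by (simp add: vs_one[OF vs] vs_one[OF vV])
  then have z: "SW F 0 = 0" by (metis add_cancel_right_right add_0)
  have "SW F (sc c x) = sV c (SW F x)" for c x
    using SW_add_scale[OF vV F, of c x 0] z by simp
  with add show ?thesis by (simp add: lin_def)
qed

lemma SW_param:
  assumes vV: "vector_space sV" and G: "\<And>a b. lin sc sV (\<lambda>v. G v a b)"
  shows "lin sc sV (\<lambda>v. SW (G v) x)"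
  unfolding SW_def by (rule lin_sum_list_fun2[OF G vV])

lemma SW_mult:
  assumes vV: "vector_space sV" and F: "bl sc sV F"
  shows "SW F (x * y) = SW (\<lambda>a b. SW (\<lambda>c d. F (a * c) (b * d)) y) x"
proof -
  have t: "teq2 sc (cm (x * y)) (concat (map (\<lambda>(a,b). map (\<lambda>(c,d). (a * c, b * d)) (cm y)) (cm x)))"
    using hopf unfolding cocomm_hopf_def by blast
  show ?thesis unfolding SW_def transfer2[OF vs vV t F]
    by (simp add: sum_list_concat_map split_def o_def)
qed

lemma SW_one:
  assumes vV: "vector_space sV" and F: "bl sc sV F"
  shows "SW F 1 = F 1 1"
proof -
  have t: "teq2 sc (cm 1) [(1,1)]"
    using hopf unfolding cocomm_hopf_def by blast
  show ?thesis unfolding SW_def transfer2[OF vs vV t F] by simp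
qed

lemma SW_cocomm:
  assumes vV: "vector_space sV" and F: "bl sc sV F"
  shows "SW F x = SW (\<lambda>a b. F b a) x"
proof -
  have t: "teq2 sc (cm x) (map (\<lambda>(a,b). (b,a)) (cm x))"
    using hopf unfolding cocomm_hopf_def by blast
  show ?thesis unfolding SW_def transfer2[OF vs vV t F]
    by (simp add: split_def o_def)
qed

lemma SW_coassoc:
  fixes sV :: "'k \<Rightarrow> 'v::ab_group_add \<Rightarrow> 'v"
  assumes vV: "vector_space sV" and T: "tl3 sc sV \<tau>"
  shows "SW (\<lambda>a b. SW (\<lambda>c d. \<tau> c d b) a) x = SW (\<lambda>a b. SW (\<lambda>c d. \<tau> a c d) b) x"
proof (rule separate'[OF vV])
  fix \<phi> :: "'v \<Rightarrow> 'k" assume \<phi>: "lin sV (*) \<phi>"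
  have "tl3 sc (*) (\<lambda>a b c. \<phi> (\<tau> a b c))"
    unfolding tl3_def by (intro conjI allI; rule lin_comp[OF _ \<phi>]) (use T in \<open>simp_all add: tl3_def\<close>)
  then have "trilin sc (\<lambda>a b c. \<phi> (\<tau> a b c))" using vs by (simp add: trilin_tl3)
  then have "(\<Sum>(a,b)\<leftarrow>cm x. \<Sum>(c,d)\<leftarrow>cm a. \<phi> (\<tau> c d b)) = (\<Sum>(a,b)\<leftarrow>cm x. \<Sum>(c,d)\<leftarrow>cm b. \<phi> (\<tau> a c d))"
    using hopf unfolding cocomm_hopf_def by blast
  then show "\<phi> (SW (\<lambda>a b. SW (\<lambda>c d. \<tau> c d b) a) x) = \<phi> (SW (\<lambda>a b. SW (\<lambda>c d. \<tau> a c d) b) x)"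
    by (simp add: SW_def lin_sum_list[OF \<phi>] split_def o_def)
qed

lemma SW_counit_gen:
  assumes "lin sc sV g"
  shows "SW (\<lambda>a b. sV (eps a) (g b)) x = g x" "SW (\<lambda>a b. sV (eps b) (g a)) x = g x"
proof -
  have "g x = g (SW (\<lambda>a b. sc (eps a) b) x)" by (simp add: counit1)
  also have "\<dots> = SW (\<lambda>a b. sV (eps a) (g b)) x"
    unfolding SW_def lin_sum_list[OF assms] by (simp add: split_def lin_scale[OF assms])
  finally show "SW (\<lambda>a b. sV (eps a) (g b)) x = g x" by simp
  have "g x = g (SW (\<lambda>a b. sc (eps b) a) x)" by (simp add: counit2)
  also have "\<dots> = SW (\<lambda>a b. sV (eps b) (g a)) x"
    unfolding SW_def lin_sum_list[OF assms] by (simp add: split_def lin_scale[OF assms])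
  finally show "SW (\<lambda>a b. sV (eps b) (g a)) x = g x" by simp
qed

lemma SW_pull:
  assumes "lin s1 s2 g"
  shows "g (SW F x) = SW (\<lambda>a b. g (F a b)) x"
  unfolding SW_def lin_sum_list[OF assms] by (simp add: split_def)

lemma SW_cong: "(\<And>a b. F a b = G a b) \<Longrightarrow> SW F x = SW G x"
  by (metis ext)

end


lemma sum_list_swap: "(\<Sum>x\<leftarrow>xs. \<Sum>y\<leftarrow>ys. f x y) = (\<Sum>y\<leftarrow>ys. \<Sum>x\<leftarrow>xs. f x y :: 'a::comm_monoid_add)"
  by (induction xs) (auto simp: sum_list_addf)

context CH begin

lemma SW_swap: "SW (\<lambda>a b. SW (\<lambda>c d. G a b c d) y) x = SW (\<lambda>c d. SW (\<lambda>a b. G a b c d) x) y"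
  unfolding SW_def split_def by (rule sum_list_swap)

lemma lin_antc[intro]: "lin sc sc f \<Longrightarrow> lin sc sc (\<lambda>x. ant (f x))"
  using lin_comp[OF _ ant_lin] .
lemma lin_mrc[intro]: "lin sc sc f \<Longrightarrow> lin sc sc (\<lambda>x. f x * c)"
  using lin_comp[OF _ lin_mr] .
lemma lin_mlc[intro]: "lin sc sc f \<Longrightarrow> lin sc sc (\<lambda>x. c * f x)"
  using lin_comp[OF _ lin_ml] .
lemma lin_idc[intro]: "lin sc sc (\<lambda>x. x)" by (rule lin_id)
lemma lin_scc[intro]: "lin sc sc f \<Longrightarrow> lin sc sc (\<lambda>x. sc c (f x))"
  by (rule lin_scaleV[OF vs])

lemma SW_lin_h[intro]: "bl sc sc F \<Longrightarrow> lin sc sc f \<Longrightarrow> lin sc sc (\<lambda>x. SW F (f x))"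
  using lin_comp[OF _ SW_lin[OF vs]] by blast

lemma SW_param_h[intro]: "(\<And>a b. lin sc sc (\<lambda>v. G v a b)) \<Longrightarrow> lin sc sc (\<lambda>v. SW (G v) x)"
  by (rule SW_param[OF vs])

lemma bl_I[intro]: "(\<And>a. lin s sV (F a)) \<Longrightarrow> (\<And>b. lin s sV (\<lambda>a. F a b)) \<Longrightarrow> bl s sV F"
  by (simp add: bl_def)

lemmas linI = bl_I lin_mlc lin_mrc lin_idc lin_antc lin_ml lin_mr lin_scc

lemma ant_one: "ant 1 = 1"
proof -
  have "bl sc sc (\<lambda>a b. ant a * b)" by (intro linI)
  then have "SW (\<lambda>a b. ant a * b) 1 = ant 1 * 1" by (rule SW_one[OF vs])
  with antipode1[of 1] show ?thesis by (simp add: eps_one vs_one[OF vs])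
qed

lemma sc_mult1: "z * sc k 1 = sc k z" by (metis mult.right_neutral scm2)
lemma sc_mult1': "sc k 1 * z = sc k z" by (metis mult_1 scm1)

definition conv :: "('h \<Rightarrow> 'h \<Rightarrow> 'h) \<Rightarrow> ('h \<Rightarrow> 'h \<Rightarrow> 'h) \<Rightarrow> 'h \<Rightarrow> 'h \<Rightarrow> 'h" where
  "conv F G x y = SW (\<lambda>a b. SW (\<lambda>c d. F a c * G b d) y) x"

lemma conv_LM: "conv (\<lambda>u v. ant (u * v)) (\<lambda>u v. u * v) x y = sc (eps x * eps y) 1"
proof -
  have "bl sc sc (\<lambda>a b. ant a * b)" by (intro linI)
  from SW_mult[OF vs this, of x y] antipode1[of "x*y"]
  show ?thesis unfolding conv_def by (simp add: eps_mult)
qed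

lemma conv_MP: "conv (\<lambda>u v. u * v) (\<lambda>u v. ant v * ant u) x y = sc (eps x * eps y) 1"
proof -
  have i: "SW (\<lambda>c d. a * c * (ant d * ant b)) y = sc (eps y) (a * ant b)" for a b
  proof -
    have "SW (\<lambda>c d. a * c * (ant d * ant b)) y = a * SW (\<lambda>c d. c * ant d) y * ant b"
      by (subst SW_pull[of sc sc "\<lambda>z. a * z * ant b"]) (auto simp: mult.assoc intro!: linI)
    also have "\<dots> = sc (eps y) (a * ant b)" by (simp add: antipode2 sc_mult1 scm1 scm2)
    finally show ?thesis .
  qed
  have "conv (\<lambda>u v. u * v) (\<lambda>u v. ant v * ant u) x y = SW (\<lambda>a b. sc (eps y) (a * ant b)) x"
    unfolding conv_def i ..
  also have "\<dots> = sc (eps y) (SW (\<lambda>a b. a * ant b) x)"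
    by (subst SW_pull[of sc sc "sc (eps y)"]) (auto intro: lin_scaleV[OF vs lin_id])
  also have "\<dots> = sc (eps x * eps y) 1" by (simp add: antipode2 vs_assoc[OF vs] mult.commute)
  finally show ?thesis .
qed

lemma conv_LE: "conv (\<lambda>u v. ant (u * v)) (\<lambda>u v. sc (eps u * eps v) 1) x y = ant (x * y)"
proof -
  have i: "SW (\<lambda>c d. ant (a * c) * sc (eps b * eps d) 1) y = sc (eps b) (ant (a * y))" for a b
  proof -
    have "SW (\<lambda>c d. ant (a * c) * sc (eps b * eps d) 1) y = SW (\<lambda>c d. sc (eps d) (sc (eps b) (ant (a * c)))) y"
      by (simp add: sc_mult1 vs_assoc[OF vs] mult.commute)
    also have "\<dots> = sc (eps b) (ant (a * y))"
      by (rule SW_counit_gen(2)) (intro linI)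
    finally show ?thesis .
  qed
  show ?thesis unfolding conv_def i
    by (rule SW_counit_gen(2)) (intro linI)
qed

lemma conv_EP: "conv (\<lambda>u v. sc (eps u * eps v) 1) (\<lambda>u v. ant v * ant u) x y = ant y * ant x"
proof -
  have i: "SW (\<lambda>c d. sc (eps a * eps c) 1 * (ant d * ant b)) y = sc (eps a) (ant y * ant b)" for a b
  proof -
    have "SW (\<lambda>c d. sc (eps a * eps c) 1 * (ant d * ant b)) y = SW (\<lambda>c d. sc (eps c) (sc (eps a) (ant d * ant b))) y"
      by (simp add: sc_mult1' vs_assoc[OF vs] mult.commute)
    also have "\<dots> = sc (eps a) (ant y * ant b)"
      by (rule SW_counit_gen(1)) (intro linI)
    finally show ?thesis .
  qed
  show ?thesis unfolding conv_def i
    by (rule SW_counit_gen(1)) (intro linI)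
qed

lemma conv_assoc:
  assumes L: "bl sc sc L" and M: "bl sc sc M" and P: "bl sc sc P"
  shows "conv (conv L M) P x y = conv L (conv M P) x y"
proof -
  have L1: "\<And>c. lin sc sc (\<lambda>a. L a c)" and L2: "\<And>a. lin sc sc (\<lambda>c. L a c)" using L by (auto simp: bl_def)
  have M1: "\<And>c. lin sc sc (\<lambda>a. M a c)" and M2: "\<And>a. lin sc sc (\<lambda>c. M a c)" using M by (auto simp: bl_def)
  have P1: "\<And>c. lin sc sc (\<lambda>a. P a c)" and P2: "\<And>a. lin sc sc (\<lambda>c. P a c)" using P by (auto simp: bl_def)
  define \<Phi> where "\<Phi> a1 a2 b c1 c2 d = L a1 c1 * M a2 c2 * P b d" for a1 a2 b c1 c2 d
  have e1: "conv L M a c * P b d = SW (\<lambda>a1 a2. SW (\<lambda>c1 c2. \<Phi> a1 a2 b c1 c2 d) c) a" for a b c d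
    unfolding conv_def \<Phi>_def
    by (subst SW_pull[of sc sc "\<lambda>z. z * P b d"], (intro linI), rule SW_cong,
        subst SW_pull[of sc sc "\<lambda>z. z * P b d"], (intro linI), rule refl)
  have e2: "L a c * conv M P b d = SW (\<lambda>b1 b2. SW (\<lambda>d1 d2. \<Phi> a b1 b2 c d1 d2) d) b" for a b c d
    unfolding conv_def \<Phi>_def
    by (subst SW_pull[of sc sc "\<lambda>z. L a c * z"], (intro linI), rule SW_cong,
        subst SW_pull[of sc sc "\<lambda>z. L a c * z"], (intro linI), simp add: mult.assoc)
  have "conv (conv L M) P x y = SW (\<lambda>a b. SW (\<lambda>c d. SW (\<lambda>a1 a2. SW (\<lambda>c1 c2. \<Phi> a1 a2 b c1 c2 d) c) a) y) x"
    unfolding conv_def[of "conv L M"] e1 ..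
  also have "\<dots> = SW (\<lambda>a b. SW (\<lambda>a1 a2. SW (\<lambda>c d. SW (\<lambda>c1 c2. \<Phi> a1 a2 b c1 c2 d) c) y) a) x"
    by (rule SW_cong, rule SW_swap)
  also have "\<dots> = SW (\<lambda>a b. SW (\<lambda>b1 b2. SW (\<lambda>c d. SW (\<lambda>c1 c2. \<Phi> a b1 b2 c1 c2 d) c) y) b) x"
    by (rule SW_coassoc[OF vs, where \<tau> = "\<lambda>a1 a2 b. SW (\<lambda>c d. SW (\<lambda>c1 c2. \<Phi> a1 a2 b c1 c2 d) c) y"])
       (unfold tl3_def \<Phi>_def, intro conjI allI SW_param_h lin_mrc lin_mlc L1 L2 M1 M2 P1 P2)
  also have "\<dots> = SW (\<lambda>a b. SW (\<lambda>b1 b2. SW (\<lambda>c d. SW (\<lambda>d1 d2. \<Phi> a b1 b2 c d1 d2) d) y) b) x"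
    by (rule SW_cong, rule SW_cong,
        rule SW_coassoc[OF vs, where \<tau> = "\<lambda>c1 c2 d. \<Phi> _ _ _ c1 c2 d"])
       (unfold tl3_def \<Phi>_def, intro conjI allI SW_param_h lin_mrc lin_mlc L1 L2 M1 M2 P1 P2)
  also have "\<dots> = SW (\<lambda>a b. SW (\<lambda>c d. SW (\<lambda>b1 b2. SW (\<lambda>d1 d2. \<Phi> a b1 b2 c d1 d2) d) b) y) x"
    by (rule SW_cong, rule SW_swap[symmetric])
  also have "\<dots> = conv L (conv M P) x y"
    unfolding conv_def[of L] e2 ..
  finally show ?thesis .
qed

lemma ant_mult: "ant (x * y) = ant y * ant x"
proof -
  have cMP: "conv (\<lambda>u v. u * v) (\<lambda>u v. ant v * ant u) = (\<lambda>u v. sc (eps u * eps v) 1)"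
    by (intro ext) (rule conv_MP)
  have cLM: "conv (\<lambda>u v. ant (u * v)) (\<lambda>u v. u * v) = (\<lambda>u v. sc (eps u * eps v) 1)"
    by (intro ext) (rule conv_LM)
  have "ant (x * y) = conv (\<lambda>u v. ant (u * v)) (conv (\<lambda>u v. u * v) (\<lambda>u v. ant v * ant u)) x y"
    unfolding cMP by (rule conv_LE[symmetric])
  also have "\<dots> = conv (conv (\<lambda>u v. ant (u * v)) (\<lambda>u v. u * v)) (\<lambda>u v. ant v * ant u) x y"
    by (rule conv_assoc[symmetric]) (intro linI)+
  also have "\<dots> = ant y * ant x" unfolding cLM by (rule conv_EP)
  finally show ?thesis .
qed

end


context CH begin

lemma lin_epsw: "vector_space sV \<Longrightarrow> lin sc sV (\<lambda>p. sV (eps p) w)"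
  using eps_lin by (simp add: lin_def vs_distrib2 vs_assoc)

lemma middle_swap:
  fixes sV :: "'k \<Rightarrow> 'v::ab_group_add \<Rightarrow> 'v"
  assumes vV: "vector_space sV"
    and P1: "\<And>b c d. lin sc sV (\<lambda>a. \<Psi> a b c d)"
    and P2: "\<And>a c d. lin sc sV (\<lambda>b. \<Psi> a b c d)"
    and P3: "\<And>a b d. lin sc sV (\<lambda>c. \<Psi> a b c d)"
    and P4: "\<And>a b c. lin sc sV (\<lambda>d. \<Psi> a b c d)"
  shows "SW (\<lambda>a b. SW (\<lambda>a1 a2. SW (\<lambda>b1 b2. \<Psi> a1 a2 b1 b2) b) a) x
       = SW (\<lambda>a b. SW (\<lambda>a1 a2. SW (\<lambda>b1 b2. \<Psi> a1 b1 a2 b2) b) a) x"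
proof -
  note SWp = SW_param[OF vV]
  have SWl: "lin sc sV (\<lambda>x. SW F (f x))" if "bl sc sV F" "lin sc sc f" for F f
    using lin_comp[OF that(2) SW_lin[OF vV that(1)]] .
  note R = conjI allI SWp SWl bl_I P1 P2 P3 P4
  have "SW (\<lambda>a b. SW (\<lambda>a1 a2. SW (\<lambda>b1 b2. \<Psi> a1 a2 b1 b2) b) a) x
      = SW (\<lambda>a b. SW (\<lambda>c d. SW (\<lambda>d1 d2. \<Psi> a c d1 d2) d) b) x"
    by (rule SW_coassoc[OF vV, where \<tau> = "\<lambda>a1 a2 b. SW (\<lambda>b1 b2. \<Psi> a1 a2 b1 b2) b"])
       (unfold tl3_def, intro R lin_id)
  also have "\<dots> = SW (\<lambda>a b. SW (\<lambda>c d. SW (\<lambda>c1 c2. \<Psi> a c1 c2 d) c) b) x"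
    by (rule SW_cong, rule SW_coassoc[OF vV, where \<tau> = "\<lambda>c d1 d2. \<Psi> _ c d1 d2", symmetric])
       (unfold tl3_def, intro R)
  also have "\<dots> = SW (\<lambda>a b. SW (\<lambda>c d. SW (\<lambda>c1 c2. \<Psi> a c2 c1 d) c) b) x"
  proof -
    have "\<And>a c d. SW (\<lambda>c1 c2. \<Psi> a c1 c2 d) c = SW (\<lambda>c1 c2. \<Psi> a c2 c1 d) c"
      by (rule SW_cocomm[OF vV]) (intro R)
    then show ?thesis by simp
  qed
  also have "\<dots> = SW (\<lambda>a b. SW (\<lambda>c d. SW (\<lambda>d1 d2. \<Psi> a d1 c d2) d) b) x"
    by (rule SW_cong, rule SW_coassoc[OF vV, where \<tau> = "\<lambda>c1 c2 d. \<Psi> _ c2 c1 d"])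
       (unfold tl3_def, intro R)
  also have "\<dots> = SW (\<lambda>a b. SW (\<lambda>a1 a2. SW (\<lambda>b1 b2. \<Psi> a1 b1 a2 b2) b) a) x"
    by (rule SW_coassoc[OF vV, where \<tau> = "\<lambda>a c d. SW (\<lambda>d1 d2. \<Psi> a d1 c d2) d", symmetric])
       (unfold tl3_def, intro R lin_id)
  finally show ?thesis .
qed

lemma cm_ant:
  fixes sV :: "'k \<Rightarrow> 'v::ab_group_add \<Rightarrow> 'v"
  assumes vV: "vector_space sV" and F: "bl sc sV F"
  shows "SW F (ant x) = SW (\<lambda>a b. F (ant a) (ant b)) x"
proof -
  have F1: "\<And>b. lin sc sV (\<lambda>a. F a b)" and F2: "\<And>a. lin sc sV (\<lambda>b. F a b)"
    using F by (auto simp: bl_def)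
  have Fa: "lin sc sV (\<lambda>x. F (f x) b)" if "lin sc sc f" for f b using lin_comp[OF that F1] .
  have Fb: "lin sc sV (\<lambda>x. F a (f x))" if "lin sc sc f" for f a using lin_comp[OF that F2] .
  note SWp = SW_param[OF vV]
  have SWl: "lin sc sV (\<lambda>x. SW F' (f x))" if "bl sc sV F'" "lin sc sc f" for F' f
    using lin_comp[OF that(2) SW_lin[OF vV that(1)]] .
  have Sc: "lin sc sV (\<lambda>x. sV c (f x))" if "lin sc sV f" for f c using lin_scaleV[OF vV that] .
  note R = conjI allI SWp SWl bl_I Fa Fb Sc lin_mlc lin_mrc lin_idc lin_antc lin_ml lin_mr lin_id
  define K where "K u v p1 p2 q1 q2 = F (u * (p1 * ant q1)) (v * (p2 * ant q2))" for u v p1 p2 q1 q2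
  define G where "G u v p q = SW (\<lambda>p1 p2. SW (\<lambda>q1 q2. K u v p1 p2 q1 q2) q) p" for u v p q
  define E where "E = SW (\<lambda>a b. SW (\<lambda>u v. SW (\<lambda>p q. G u v p q) b) (ant a)) x"
  have KG: "bl sc sV (\<lambda>u v. G u v p q)" for p q unfolding G_def K_def by (intro R)
  have w1: "SW (\<lambda>p q. G u v p q) b = sV (eps b) (F u v)" for u v b
  proof -
    have "SW (\<lambda>p q. G u v p q) b = SW (\<lambda>p q. SW (\<lambda>p1 p2. SW (\<lambda>q1 q2. F (u * (p1 * ant p2)) (v * (q1 * ant q2))) q) p) b"
      unfolding G_def K_def
      by (rule middle_swap[OF vV]) (intro R)+
    also have "\<dots> = SW (\<lambda>p q. sV (eps q) (sV (eps p) (F u v))) b"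
    proof -
      have i1: "SW (\<lambda>q1 q2. F X (v * (q1 * ant q2))) q = sV (eps q) (F X v)" for X q
      proof -
        have "SW (\<lambda>q1 q2. F X (v * (q1 * ant q2))) q = F X (v * SW (\<lambda>q1 q2. q1 * ant q2) q)"
        proof -
          have lF: "lin sc sV (\<lambda>z. F X (v * z))" by (intro R)
          show ?thesis using SW_pull[OF lF, of "\<lambda>q1 q2. q1 * ant q2" q] by simp
        qed
        also have "\<dots> = sV (eps q) (F X v)"
          by (simp add: antipode2 sc_mult1 lin_scale[OF F2])
        finally show ?thesis .
      qed
      have i2: "SW (\<lambda>p1 p2. sV (eps q) (F (u * (p1 * ant p2)) v)) p = sV (eps q) (sV (eps p) (F u v))" for p q
      proof -
        have "SW (\<lambda>p1 p2. sV (eps q) (F (u * (p1 * ant p2)) v)) p = sV (eps q) (F (u * SW (\<lambda>p1 p2. p1 * ant p2) p) v)"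
        proof -
          have lF: "lin sc sV (\<lambda>z. sV (eps q) (F (u * z) v))" by (intro R)
          show ?thesis using SW_pull[OF lF, of "\<lambda>p1 p2. p1 * ant p2" p] by simp
        qed
        also have "\<dots> = sV (eps q) (sV (eps p) (F u v))"
          by (simp add: antipode2 sc_mult1 lin_scale[OF F1])
        finally show ?thesis .
      qed
      show ?thesis by (simp add: i1 i2)
    qed
    also have "\<dots> = sV (eps b) (F u v)"
      by (rule SW_counit_gen(2)[of sV "\<lambda>p. sV (eps p) (F u v)"]) (rule lin_epsw[OF vV])
    finally show ?thesis .
  qed
  have "E = SW (\<lambda>a b. SW (\<lambda>u v. sV (eps b) (F u v)) (ant a)) x"
    unfolding E_def w1 ..
  also have "\<dots> = SW (\<lambda>a b. sV (eps b) (SW F (ant a))) x"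
  proof -
    have "\<And>a b. SW (\<lambda>u v. sV (eps b) (F u v)) (ant a) = sV (eps b) (SW F (ant a))"
      by (rule SW_pull[symmetric]) (rule lin_scaleV[OF vV lin_id])
    then show ?thesis by simp
  qed
  also have "\<dots> = SW F (ant x)"
    by (rule SW_counit_gen(2)[of sV "\<lambda>a. SW F (ant a)"]) (intro R F)
  finally have E1: "E = SW F (ant x)" .
  have sw1: "SW (\<lambda>u v. SW (\<lambda>p q. G u v p q) b) (ant a) = SW (\<lambda>p q. SW (\<lambda>u v. G u v p q) (ant a)) b" for a b
    by (rule SW_swap)
  have "E = SW (\<lambda>a b. SW (\<lambda>p q. SW (\<lambda>u v. G u v p q) (ant a)) b) x"
    unfolding E_def sw1 ..
  also have "\<dots> = SW (\<lambda>a b. SW (\<lambda>a1 a2. SW (\<lambda>u v. G u v a2 b) (ant a1)) a) x"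
    by (rule SW_coassoc[OF vV, where \<tau> = "\<lambda>a p q. SW (\<lambda>u v. G u v p q) (ant a)", symmetric])
       (unfold tl3_def G_def K_def, intro R)
  also have "\<dots> = SW (\<lambda>a b. sV (eps a) (SW (\<lambda>q1 q2. F (ant q1) (ant q2)) b)) x"
  proof -
    have "SW (\<lambda>a1 a2. SW (\<lambda>u v. G u v a2 b) (ant a1)) a = sV (eps a) (SW (\<lambda>q1 q2. F (ant q1) (ant q2)) b)" for a b
    proof -
      have s1: "SW (\<lambda>a1 a2. SW (\<lambda>u v. G u v a2 b) (ant a1)) a
          = SW (\<lambda>a1 a2. SW (\<lambda>u v. SW (\<lambda>q1 q2. SW (\<lambda>p1 p2. K u v p1 p2 q1 q2) a2) b) (ant a1)) a"
        unfolding G_def by (subst SW_swap) (rule refl)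
      have s2: "\<dots> = SW (\<lambda>a1 a2. SW (\<lambda>q1 q2. SW (\<lambda>u v. SW (\<lambda>p1 p2. K u v p1 p2 q1 q2) a2) (ant a1)) b) a"
        by (subst SW_swap) (rule refl)
      have s3: "\<dots> = SW (\<lambda>q1 q2. SW (\<lambda>a1 a2. SW (\<lambda>u v. SW (\<lambda>p1 p2. K u v p1 p2 q1 q2) a2) (ant a1)) a) b"
        by (rule SW_swap)
      have s4: "SW (\<lambda>a1 a2. SW (\<lambda>u v. SW (\<lambda>p1 p2. K u v p1 p2 q1 q2) a2) (ant a1)) a = sV (eps a) (F (ant q1) (ant q2))" for q1 q2
      proof -
        define F' where "F' r s = F (r * ant q1) (s * ant q2)" for r s
        have bF': "bl sc sV F'" unfolding F'_def by (intro R)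
        have "SW (\<lambda>u v. SW (\<lambda>p1 p2. K u v p1 p2 q1 q2) a2) (ant a1) = SW F' (ant a1 * a2)" for a1 a2
          unfolding K_def SW_mult[OF vV bF'] F'_def by (simp add: mult.assoc)
        then have "SW (\<lambda>a1 a2. SW (\<lambda>u v. SW (\<lambda>p1 p2. K u v p1 p2 q1 q2) a2) (ant a1)) a
             = SW (\<lambda>a1 a2. SW F' (ant a1 * a2)) a" by simp
        also have "\<dots> = SW F' (SW (\<lambda>a1 a2. ant a1 * a2) a)"
          by (rule SW_pull[symmetric]) (rule SW_lin[OF vV bF'])
        also have "\<dots> = sV (eps a) (SW F' 1)"
          using SW_lin[OF vV bF'] by (simp add: antipode1 lin_scale)
        also have "\<dots> = sV (eps a) (F (ant q1) (ant q2))"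
          by (simp add: SW_one[OF vV bF'] F'_def)
        finally show ?thesis .
      qed
      have "SW (\<lambda>a1 a2. SW (\<lambda>u v. G u v a2 b) (ant a1)) a = SW (\<lambda>q1 q2. sV (eps a) (F (ant q1) (ant q2))) b"
        using s1 s2 s3 s4 by simp
      also have "\<dots> = sV (eps a) (SW (\<lambda>q1 q2. F (ant q1) (ant q2)) b)"
        by (rule SW_pull[symmetric]) (rule lin_scaleV[OF vV lin_id])
      finally show ?thesis .
    qed
    then show ?thesis by simp
  qed
  also have "\<dots> = SW (\<lambda>a b. F (ant a) (ant b)) x"
    by (rule SW_counit_gen(1)) (intro R)
  finally show ?thesis using E1 by simp
qed

end


locale CHA = CH sc cm eps ant
  for sc :: "'k::field_char_0 \<Rightarrow> 'h::ring_1 \<Rightarrow> 'h"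
    and cm :: "'h \<Rightarrow> ('h \<times> 'h) list"
    and eps :: "'h \<Rightarrow> 'k"
    and ant :: "'h \<Rightarrow> 'h" +
  fixes scA :: "'k \<Rightarrow> 'a::comm_ring_1 \<Rightarrow> 'a"
  assumes calg: "comm_algebra scA"
begin

lemma vA: "vector_space scA" using calg by (simp add: comm_algebra_def)
lemma scA1: "scA c (x * y) = scA c x * y" using calg by (simp add: comm_algebra_def)
lemma scA2: "scA c (x * y) = x * scA c y" by (metis scA1 mult.commute)

lemma linA_ml: "lin scA scA (\<lambda>z. k * z)" by (simp add: lin_def distrib_left scA2)
lemma linA_mr: "lin scA scA (\<lambda>z. z * k)" by (simp add: lin_def distrib_right scA1)

definition cv :: "('h \<Rightarrow> 'a) \<Rightarrow> ('h \<Rightarrow> 'a) \<Rightarrow> 'h \<Rightarrow> 'a" where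
  "cv f g = (\<lambda>a. SW (\<lambda>x y. f x * g y) a)"

definition ee :: "'h \<Rightarrow> 'a" where "ee = (\<lambda>a. scA (eps a) 1)"

lemma charH_iff: "f \<in> charH sc scA \<longleftrightarrow> lin sc scA f \<and> (\<forall>x y. f (x * y) = f x * f y) \<and> f 1 = 1"
  using vs vA by (simp add: charH_def linear_lin)

lemma bl_fg: "lin sc scA f \<Longrightarrow> lin sc scA g \<Longrightarrow> bl sc scA (\<lambda>x y. f x * g y)"
  unfolding bl_def by (auto intro: lin_comp[OF _ linA_ml] lin_comp[OF _ linA_mr])

lemma cv_lin: "lin sc scA f \<Longrightarrow> lin sc scA g \<Longrightarrow> lin sc scA (cv f g)"
  unfolding cv_def using SW_lin[OF vA bl_fg] by simp

lemma cv_closed: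
  assumes f: "f \<in> charH sc scA" and g: "g \<in> charH sc scA"
  shows "cv f g \<in> charH sc scA"
proof -
  have lf: "lin sc scA f" and lg: "lin sc scA g" and mf: "\<And>x y. f (x * y) = f x * f y"
    and mg: "\<And>x y. g (x * y) = g x * g y" and f1: "f 1 = 1" and g1: "g 1 = 1"
    using f g by (auto simp: charH_iff)
  have "cv f g (x * y) = cv f g x * cv f g y" for x y
  proof -
    have "cv f g (x * y) = SW (\<lambda>a b. SW (\<lambda>c d. (f a * g b) * (f c * g d)) y) x"
      unfolding cv_def SW_mult[OF vA bl_fg[OF lf lg]] mf mg by (simp add: ac_simps)
    also have "\<dots> = SW (\<lambda>a b. (f a * g b) * cv f g y) x"
      unfolding cv_def by (simp add: SW_pull[OF linA_ml, symmetric])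
    also have "\<dots> = cv f g x * cv f g y"
      unfolding cv_def by (simp add: SW_pull[OF linA_mr, symmetric])
    finally show ?thesis .
  qed
  moreover have "cv f g 1 = 1"
    unfolding cv_def SW_one[OF vA bl_fg[OF lf lg]] f1 g1 by simp
  ultimately show ?thesis using cv_lin[OF lf lg] by (simp add: charH_iff)
qed

lemma ee_char: "ee \<in> charH sc scA"
proof -
  have "lin sc scA ee" unfolding ee_def by (rule lin_epsw[OF vA])
  moreover have "ee (x * y) = ee x * ee y" for x y
    unfolding ee_def eps_mult by (metis mult_1 scA1 vs_assoc[OF vA])
  moreover have "ee 1 = 1" unfolding ee_def eps_one by (simp add: vs_one[OF vA])
  ultimately show ?thesis by (simp add: charH_iff)
qed

lemma cv_assoc:
  assumes f: "lin sc scA f" and g: "lin sc scA g" and h: "lin sc scA h"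
  shows "cv (cv f g) h = cv f (cv g h)"
proof
  fix x
  have "cv (cv f g) h x = SW (\<lambda>a b. SW (\<lambda>c d. f c * g d * h b) a) x"
    unfolding cv_def by (simp add: SW_pull[OF linA_mr, symmetric])
  also have "\<dots> = SW (\<lambda>a b. SW (\<lambda>c d. f a * g c * h d) b) x"
    by (rule SW_coassoc[OF vA]) (unfold tl3_def, intro conjI allI lin_comp[OF _ linA_mr] lin_comp[OF _ linA_ml] f g h)
  also have "\<dots> = cv f (cv g h) x"
    unfolding cv_def by (simp add: SW_pull[OF linA_ml, symmetric] mult.assoc)
  finally show "cv (cv f g) h x = cv f (cv g h) x" .
qed

lemma cv_ee_left: "lin sc scA f \<Longrightarrow> cv ee f = f"
  unfolding cv_def ee_def
  by (rule ext, subst SW_counit_gen(1)[of scA f, symmetric]) (auto simp: scA1[symmetric])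

lemma cv_ee_right: "lin sc scA f \<Longrightarrow> cv f ee = f"
  unfolding cv_def ee_def
  by (rule ext, subst SW_counit_gen(2)[of scA f, symmetric]) (auto simp: scA2[symmetric] mult.commute)

lemma inv_char: "f \<in> charH sc scA \<Longrightarrow> (\<lambda>x. f (ant x)) \<in> charH sc scA"
  by (auto simp: charH_iff ant_mult ant_one mult.commute intro: lin_comp[OF ant_lin])

lemma cv_inv: 
  assumes "f \<in> charH sc scA" shows "cv (\<lambda>x. f (ant x)) f = ee"
proof
  fix x
  have lf: "lin sc scA f" and mf: "\<And>x y. f (x * y) = f x * f y" and f1: "f 1 = 1"
    using assms by (auto simp: charH_iff)
  have "cv (\<lambda>x. f (ant x)) f x = SW (\<lambda>a b. f (ant a * b)) x" unfolding cv_def mf ..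
  also have "\<dots> = f (SW (\<lambda>a b. ant a * b) x)" by (rule SW_pull[OF lf, symmetric])
  also have "\<dots> = ee x" by (simp add: antipode1 lin_scale[OF lf] f1 ee_def)
  finally show "cv (\<lambda>x. f (ant x)) f x = ee x" .
qed

lemma group_G: "group (CharH_grp sc cm eps scA)"
proof -
  have m: "mult (CharH_grp sc cm eps scA) = cv" unfolding CharH_grp_def cv_def SW_def by (simp add: fun_eq_iff)
  have o: "one (CharH_grp sc cm eps scA) = ee" unfolding CharH_grp_def ee_def by simp
  have c: "carrier (CharH_grp sc cm eps scA) = charH sc scA" unfolding CharH_grp_def by simp
  show ?thesis
  proof (rule groupI, unfold m o c)
    show "\<And>x y. x \<in> charH sc scA \<Longrightarrow> y \<in> charH sc scA \<Longrightarrow> cv x y \<in> charH sc scA" by (rule cv_closed)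
    show "ee \<in> charH sc scA" by (rule ee_char)
    show "\<And>x y z. x \<in> charH sc scA \<Longrightarrow> y \<in> charH sc scA \<Longrightarrow> z \<in> charH sc scA \<Longrightarrow> cv (cv x y) z = cv x (cv y z)"
      by (rule cv_assoc) (auto simp: charH_iff)
    show "\<And>x. x \<in> charH sc scA \<Longrightarrow> cv ee x = x" by (rule cv_ee_left) (auto simp: charH_iff)
    show "\<And>x. x \<in> charH sc scA \<Longrightarrow> \<exists>y\<in>charH sc scA. cv y x = ee"
      using inv_char cv_inv by blast
  qed
qed

end


context CH begin

lemma coalg_lin: "coalg_hom sc cm eps B \<Longrightarrow> lin sc sc B"
  by (simp add: coalg_hom_def linear_lin)

lemma coalg_eps: "coalg_hom sc cm eps B \<Longrightarrow> eps (B x) = eps x"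
  by (simp add: coalg_hom_def)

lemma coalg_cm:
  assumes B: "coalg_hom sc cm eps B" and vV: "vector_space sV" and F: "bl sc sV F"
  shows "SW F (B x) = SW (\<lambda>a b. F (B a) (B b)) x"
proof -
  have t: "teq2 sc (cm (B x)) (map (\<lambda>(a,b). (B a, B b)) (cm x))"
    using B by (simp add: coalg_hom_def)
  show ?thesis unfolding SW_def transfer2[OF vs vV t F] by (simp add: split_def o_def)
qed

lemma sigma_SW: "rb_sigma cm ant B1 B2 a = SW (\<lambda>x y. B1 x * ant (B2 y)) a"
  by (simp add: rb_sigma_def SW_def)

lemma cm_sigma:
  fixes sV :: "'k \<Rightarrow> 'v::ab_group_add \<Rightarrow> 'v"
  assumes B1: "coalg_hom sc cm eps B1" and B2: "coalg_hom sc cm eps B2"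
    and vV: "vector_space sV" and F: "bl sc sV F"
  shows "SW F (rb_sigma cm ant B1 B2 b) = SW (\<lambda>u v. F (rb_sigma cm ant B1 B2 u) (rb_sigma cm ant B1 B2 v)) b"
proof -
  have F1: "\<And>b. lin sc sV (\<lambda>a. F a b)" and F2: "\<And>a. lin sc sV (\<lambda>b. F a b)"
    using F by (auto simp: bl_def)
  have Fa: "lin sc sV (\<lambda>x. F (f x) b)" if "lin sc sc f" for f b using lin_comp[OF that F1] .
  have Fb: "lin sc sV (\<lambda>x. F a (f x))" if "lin sc sc f" for f a using lin_comp[OF that F2] .
  note SWp = SW_param[OF vV]
  have SWl: "lin sc sV (\<lambda>x. SW F' (f x))" if "bl sc sV F'" "lin sc sc f" for F' f
    using lin_comp[OF that(2) SW_lin[OF vV that(1)]] .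
  have lB1: "lin sc sc B1" and lB2: "lin sc sc B2" using B1 B2 by (auto intro: coalg_lin)
  have lB1c: "lin sc sc (\<lambda>x. B1 (f x))" if "lin sc sc f" for f using lin_comp[OF that lB1] .
  have lB2c: "lin sc sc (\<lambda>x. B2 (f x))" if "lin sc sc f" for f using lin_comp[OF that lB2] .
  note R = conjI allI SWp SWl bl_I Fa Fb lB1c lB2c lin_mlc lin_mrc lin_idc lin_antc lin_ml lin_mr lin_id
  define \<Psi> where "\<Psi> p q r s = F (B1 p * ant (B2 r)) (B1 q * ant (B2 s))" for p q r s
  have step: "SW F (B1 u * ant (B2 v)) = SW (\<lambda>p q. SW (\<lambda>r s. \<Psi> p q r s) v) u" for u v
  proof -
    have bl1: "bl sc sV (\<lambda>p q. F (p * r) (q * s))" for r s by (intro R)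
    have bl2: "bl sc sV (\<lambda>p q. SW (\<lambda>r s. F (p * r) (q * s)) (ant (B2 v)))" by (intro R)
    have bl3: "bl sc sV (\<lambda>r s. F (B1 p * r) (B1 q * s))" for p q by (intro R)
    have bl4: "bl sc sV (\<lambda>r s. F (B1 p * ant r) (B1 q * ant s))" for p q by (intro R)
    have "SW F (B1 u * ant (B2 v)) = SW (\<lambda>p q. SW (\<lambda>r s. F (p * r) (q * s)) (ant (B2 v))) (B1 u)"
      by (rule SW_mult[OF vV F])
    also have "\<dots> = SW (\<lambda>p q. SW (\<lambda>r s. F (B1 p * r) (B1 q * s)) (ant (B2 v))) u"
      by (rule coalg_cm[OF B1 vV bl2])
    also have "\<dots> = SW (\<lambda>p q. SW (\<lambda>r s. F (B1 p * ant r) (B1 q * ant s)) (B2 v)) u"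
      by (simp add: cm_ant[OF vV bl3])
    also have "\<dots> = SW (\<lambda>p q. SW (\<lambda>r s. \<Psi> p q r s) v) u"
      by (simp add: coalg_cm[OF B2 vV bl4] \<Psi>_def)
    finally show ?thesis .
  qed
  have "SW F (rb_sigma cm ant B1 B2 b) = SW (\<lambda>x y. SW F (B1 x * ant (B2 y))) b"
    unfolding sigma_SW by (rule SW_pull[OF SW_lin[OF vV F]])
  also have "\<dots> = SW (\<lambda>x y. SW (\<lambda>p q. SW (\<lambda>r s. \<Psi> p q r s) y) x) b"
    by (simp add: step)
  also have "\<dots> = SW (\<lambda>x y. SW (\<lambda>p q. SW (\<lambda>r s. \<Psi> p r q s) y) x) b"
    by (rule middle_swap[OF vV]) (unfold \<Psi>_def, (intro R)+)
  also have "\<dots> = SW (\<lambda>u v. F (rb_sigma cm ant B1 B2 u) (rb_sigma cm ant B1 B2 v)) b"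
  proof -
    have "F (rb_sigma cm ant B1 B2 u) (rb_sigma cm ant B1 B2 v) = SW (\<lambda>p q. SW (\<lambda>r s. \<Psi> p r q s) v) u" for u v
    proof -
      define G where "G = (\<lambda>x y. B1 x * ant (B2 y))"
      have lf1: "lin sc sV (\<lambda>z. F z (SW G v))" by (intro R)
      have lf2: "lin sc sV (\<lambda>z. F X z)" for X by (intro R)
      have "F (SW G u) (SW G v) = SW (\<lambda>p q. F (G p q) (SW G v)) u" by (rule SW_pull[OF lf1])
      also have "\<dots> = SW (\<lambda>p q. SW (\<lambda>r s. F (G p q) (G r s)) v) u"
        by (simp add: SW_pull[OF lf2])
      finally show ?thesis unfolding sigma_SW \<Psi>_def by (simp add: G_def)
    qed
    then show ?thesis by simp
  qed
  finally show ?thesis .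
qed

lemma rb_cm1_prop:
  assumes B1: "coalg_hom sc cm eps B1" and B2: "coalg_hom sc cm eps B2"
    and a: "a \<in> rb_H1 cm ant B1 B2"
  shows "set (rb_cm1 sc cm ant B1 B2 a) \<subseteq> rb_H1 cm ant B1 B2 \<times> rb_H1 cm ant B1 B2
       \<and> teq2 sc (rb_cm1 sc cm ant B1 B2 a) (cm a)"
proof -
  obtain b where ab: "a = rb_sigma cm ant B1 B2 b" using a by (auto simp: rb_H1_def)
  define xs where "xs = map (\<lambda>(u,v). (rb_sigma cm ant B1 B2 u, rb_sigma cm ant B1 B2 v)) (cm b)"
  have "set xs \<subseteq> rb_H1 cm ant B1 B2 \<times> rb_H1 cm ant B1 B2" by (auto simp: xs_def rb_H1_def)
  moreover have "teq2 sc xs (cm a)"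
    unfolding teq2_def
  proof (intro allI impI)
    fix \<beta> :: "'h \<Rightarrow> 'h \<Rightarrow> 'k" assume "bilin sc \<beta>"
    then have F: "bl sc (*) \<beta>" using vs by (simp add: bilin_bl)
    show "(\<Sum>(a,b)\<leftarrow>xs. \<beta> a b) = (\<Sum>(a,b)\<leftarrow>cm a. \<beta> a b)"
      using cm_sigma[OF B1 B2 vs_field F, of b]
      by (simp add: ab xs_def SW_def split_def o_def)
  qed
  ultimately show ?thesis unfolding rb_cm1_def by (rule someI[where x=xs, OF conjI])
qed

end

context CHA begin

lemma calB_hom:
  assumes B1: "coalg_hom sc cm eps B1" and B2: "coalg_hom sc cm eps B2" and B: "coalg_hom sc cm eps B"
    and f: "f \<in> charH sc scA" and g: "g \<in> charH sc scA"
  shows "calB cm ant B1 B2 B (cv f g)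
     = mult (CharH1_grp sc cm eps ant B1 B2 scA) (calB cm ant B1 B2 B f) (calB cm ant B1 B2 B g)"
proof
  fix a
  have lf: "lin sc scA f" and lg: "lin sc scA g" using f g by (auto simp: charH_iff)
  have lfB: "lin sc scA (\<lambda>x. f (B x))" and lgB: "lin sc scA (\<lambda>x. g (B x))"
    using lin_comp[OF coalg_lin[OF B]] lf lg by auto
  show "calB cm ant B1 B2 B (cv f g) a
     = mult (CharH1_grp sc cm eps ant B1 B2 scA) (calB cm ant B1 B2 B f) (calB cm ant B1 B2 B g) a"
  proof (cases "a \<in> rb_H1 cm ant B1 B2")
    case True
    note P = rb_cm1_prop[OF B1 B2 True]
    have "(\<Sum>(x,y)\<leftarrow>rb_cm1 sc cm ant B1 B2 a. calB cm ant B1 B2 B f x * calB cm ant B1 B2 B g y)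
        = (\<Sum>(x,y)\<leftarrow>rb_cm1 sc cm ant B1 B2 a. f (B x) * g (B y))"
      by (rule arg_cong[where f=sum_list], rule map_cong[OF refl]) (use P in \<open>auto simp: calB_def\<close>)
    also have "\<dots> = (\<Sum>(x,y)\<leftarrow>cm a. f (B x) * g (B y))"
      by (rule transfer2[OF vs vA conjunct2[OF P] bl_fg[OF lfB lgB]])
    also have "\<dots> = cv f g (B a)"
      unfolding cv_def coalg_cm[OF B vA bl_fg[OF lf lg]] by (simp add: SW_def)
    finally show ?thesis using True by (simp add: CharH1_grp_def calB_def)
  next
    case False
    then show ?thesis by (simp add: CharH1_grp_def calB_def)
  qed
qed

lemma calB_one:
  assumes B: "coalg_hom sc cm eps B"
  shows "calB cm ant B1 B2 B ee = one (CharH1_grp sc cm eps ant B1 B2 scA)"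
  by (simp add: calB_def CharH1_grp_def ee_def coalg_eps[OF B] fun_eq_iff)

end


lemma img_group:
  fixes G :: "('g, 'x) monoid_scheme" and M :: "('c, 'y) monoid_scheme"
  assumes G: "group G"
    and hm: "\<And>x y. x \<in> carrier G \<Longrightarrow> y \<in> carrier G \<Longrightarrow> h (x \<otimes>\<^bsub>G\<^esub> y) = h x \<otimes>\<^bsub>M\<^esub> h y"
    and h1: "h \<one>\<^bsub>G\<^esub> = \<one>\<^bsub>M\<^esub>"
  shows "group (M\<lparr>carrier := h ` carrier G\<rparr>)" "group_hom G (M\<lparr>carrier := h ` carrier G\<rparr>) h"
proof -
  interpret G: group G by (rule G)
  show gI: "group (M\<lparr>carrier := h ` carrier G\<rparr>)"
  proof (rule groupI, simp_all)
    show "\<And>x y. x \<in> h ` carrier G \<Longrightarrow> y \<in> h ` carrier G \<Longrightarrow> x \<otimes>\<^bsub>M\<^esub> y \<in> h ` carrier G"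
      using hm by (auto simp flip: hm intro!: imageI)
    show "\<one>\<^bsub>M\<^esub> \<in> h ` carrier G" using h1 by (metis G.one_closed imageI)
    show "\<And>x y z. x \<in> h ` carrier G \<Longrightarrow> y \<in> h ` carrier G \<Longrightarrow> z \<in> h ` carrier G \<Longrightarrow>
        x \<otimes>\<^bsub>M\<^esub> y \<otimes>\<^bsub>M\<^esub> z = x \<otimes>\<^bsub>M\<^esub> (y \<otimes>\<^bsub>M\<^esub> z)"
      by (auto simp flip: hm simp: G.m_assoc)
    show "\<And>x. x \<in> h ` carrier G \<Longrightarrow> \<one>\<^bsub>M\<^esub> \<otimes>\<^bsub>M\<^esub> x = x"
      by (auto simp flip: hm h1)
    show "\<And>x. x \<in> h ` carrier G \<Longrightarrow> \<exists>y\<in>carrier G. h y \<otimes>\<^bsub>M\<^esub> x = \<one>\<^bsub>M\<^esub>"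
    proof -
      fix x assume "x \<in> h ` carrier G"
      then obtain g where g: "g \<in> carrier G" "x = h g" by auto
      then have "h (inv\<^bsub>G\<^esub> g) \<otimes>\<^bsub>M\<^esub> x = \<one>\<^bsub>M\<^esub>" by (simp flip: hm h1)
      then show "\<exists>y\<in>carrier G. h y \<otimes>\<^bsub>M\<^esub> x = \<one>\<^bsub>M\<^esub>" using g by (metis G.inv_closed)
    qed
  qed
  show "group_hom G (M\<lparr>carrier := h ` carrier G\<rparr>) h"
    unfolding group_hom_def group_hom_axioms_def
    using G gI by (auto simp: hom_def hm)
qed

lemma normal_swap:
  assumes G: "group G" and A: "A \<lhd> G" and B: "B \<lhd> G" and f: "f \<in> carrier G"
    and ex: "\<exists>b\<in>B. f \<otimes>\<^bsub>G\<^esub> inv\<^bsub>G\<^esub> b \<in> A"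
  shows "\<exists>a\<in>A. f \<otimes>\<^bsub>G\<^esub> inv\<^bsub>G\<^esub> a \<in> B"
proof -
  interpret G: group G by (rule G)
  interpret B: normal B G by (rule B)
  interpret A: normal A G by (rule A)
  obtain b where b: "b \<in> B" "f \<otimes>\<^bsub>G\<^esub> inv\<^bsub>G\<^esub> b \<in> A" using ex by blast
  have bc: "b \<in> carrier G" using b B.subset by auto
  have "f \<otimes>\<^bsub>G\<^esub> inv\<^bsub>G\<^esub> (f \<otimes>\<^bsub>G\<^esub> inv\<^bsub>G\<^esub> b) = f \<otimes>\<^bsub>G\<^esub> b \<otimes>\<^bsub>G\<^esub> inv\<^bsub>G\<^esub> f"
    using f bc by (simp add: G.inv_mult_group G.m_assoc)
  also have "\<dots> \<in> B" by (rule B.inv_op_closed2[OF f b(1)])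
  finally show ?thesis using b(2) by blast
qed

lemma ker_char:
  assumes G: "group G" and gh: "group_hom G I h" and surj: "h ` carrier G = carrier I"
    and nN: "(h ` Kb) \<lhd> I" and Kb: "Kb \<subseteq> carrier G" and f: "f \<in> carrier G"
  shows "((h ` Kb) #>\<^bsub>I\<^esub> h f = h ` Kb) \<longleftrightarrow> (\<exists>b\<in>Kb. f \<otimes>\<^bsub>G\<^esub> inv\<^bsub>G\<^esub> b \<in> kernel G I h)"
proof -
  interpret G: group G by (rule G)
  interpret gh: group_hom G I h by (rule gh)
  interpret N: normal "h ` Kb" I by (rule nN)
  have hf: "h f \<in> carrier I" using f by simp
  have "((h ` Kb) #>\<^bsub>I\<^esub> h f = h ` Kb) \<longleftrightarrow> h f \<in> h ` Kb"
  proof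
    assume "(h ` Kb) #>\<^bsub>I\<^esub> h f = h ` Kb"
    moreover have "h f \<in> (h ` Kb) #>\<^bsub>I\<^esub> h f"
      by (rule gh.H.rcos_self[OF hf N.subgroup_axioms])
    ultimately show "h f \<in> h ` Kb" by simp
  next
    assume "h f \<in> h ` Kb"
    then show "(h ` Kb) #>\<^bsub>I\<^esub> h f = h ` Kb"
      by (rule N.rcos_const[OF gh.H.group_axioms])
  qed
  also have "\<dots> \<longleftrightarrow> (\<exists>b\<in>Kb. f \<otimes>\<^bsub>G\<^esub> inv\<^bsub>G\<^esub> b \<in> kernel G I h)"
  proof
    assume "h f \<in> h ` Kb"
    then obtain b where b: "b \<in> Kb" "h f = h b" by auto
    have bc: "b \<in> carrier G" using b Kb by auto
    have "h (f \<otimes>\<^bsub>G\<^esub> inv\<^bsub>G\<^esub> b) = \<one>\<^bsub>I\<^esub>"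
      using f bc b(2) by (simp add: gh.hom_inv)
    then have "f \<otimes>\<^bsub>G\<^esub> inv\<^bsub>G\<^esub> b \<in> kernel G I h"
      using f bc by (simp add: kernel_def)
    then show "\<exists>b\<in>Kb. f \<otimes>\<^bsub>G\<^esub> inv\<^bsub>G\<^esub> b \<in> kernel G I h"
      using b(1) by blast
  next
    assume "\<exists>b\<in>Kb. f \<otimes>\<^bsub>G\<^esub> inv\<^bsub>G\<^esub> b \<in> kernel G I h"
    then obtain b where b: "b \<in> Kb" "f \<otimes>\<^bsub>G\<^esub> inv\<^bsub>G\<^esub> b \<in> kernel G I h" by auto
    have bc: "b \<in> carrier G" using b Kb by auto
    have "h f = h (f \<otimes>\<^bsub>G\<^esub> inv\<^bsub>G\<^esub> b \<otimes>\<^bsub>G\<^esub> b)"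
      using f bc by (simp add: G.m_assoc)
    also have "\<dots> = h b" using b(2) f bc by (simp add: kernel_def)
    finally show "h f \<in> h ` Kb" using b(1) by auto
  qed
  finally show ?thesis .
qed

lemma the_elem_ker:
  assumes gh: "group_hom G H \<psi>" and f: "f \<in> carrier G"
  shows "the_elem (\<psi> ` (kernel G H \<psi> #>\<^bsub>G\<^esub> f)) = \<psi> f"
proof -
  interpret gh: group_hom G H \<psi> by (rule gh)
  have "f \<in> kernel G H \<psi> #>\<^bsub>G\<^esub> f" by (rule gh.G.rcos_self[OF f gh.subgroup_kernel])
  then have ne: "kernel G H \<psi> #>\<^bsub>G\<^esub> f \<noteq> {}" by auto
  have *: "\<forall>x\<in>kernel G H \<psi> #>\<^bsub>G\<^esub> f. \<psi> x = \<psi> f"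
    using f by (auto simp: r_coset_def kernel_def)
  show ?thesis by (rule the_elem_image_unique[OF ne]) (use * in blast)
qed

lemma main_abstract:
  fixes G :: "('g, 'x) monoid_scheme" and M :: "('c, 'y) monoid_scheme"
  assumes G: "group G"
    and hm1: "\<And>x y. x \<in> carrier G \<Longrightarrow> y \<in> carrier G \<Longrightarrow> h1 (x \<otimes>\<^bsub>G\<^esub> y) = h1 x \<otimes>\<^bsub>M\<^esub> h1 y"
    and ho1: "h1 \<one>\<^bsub>G\<^esub> = \<one>\<^bsub>M\<^esub>"
    and hm2: "\<And>x y. x \<in> carrier G \<Longrightarrow> y \<in> carrier G \<Longrightarrow> h2 (x \<otimes>\<^bsub>G\<^esub> y) = h2 x \<otimes>\<^bsub>M\<^esub> h2 y"
    and ho2: "h2 \<one>\<^bsub>G\<^esub> = \<one>\<^bsub>M\<^esub>"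
  shows "\<exists>\<Theta>. \<Theta> \<in> iso (M\<lparr>carrier := h1 ` carrier G\<rparr> Mod (h1 ` kernel G M h2))
                      (M\<lparr>carrier := h2 ` carrier G\<rparr> Mod (h2 ` kernel G M h1)) \<and>
          (\<forall>f \<in> carrier G. \<Theta> ((h1 ` kernel G M h2) #>\<^bsub>M\<lparr>carrier := h1 ` carrier G\<rparr>\<^esub> h1 f)
                          = (h2 ` kernel G M h1) #>\<^bsub>M\<lparr>carrier := h2 ` carrier G\<rparr>\<^esub> h2 f)"
proof -
  interpret G: group G by (rule G)
  define I1 where "I1 = M\<lparr>carrier := h1 ` carrier G\<rparr>"
  define I2 where "I2 = M\<lparr>carrier := h2 ` carrier G\<rparr>"
  have g1: "group I1" and gh1: "group_hom G I1 h1" unfolding I1_def using img_group[OF G hm1 ho1] by auto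
  have g2: "group I2" and gh2: "group_hom G I2 h2" unfolding I2_def using img_group[OF G hm2 ho2] by auto
  have s1: "h1 ` carrier G = carrier I1" and s2: "h2 ` carrier G = carrier I2" by (simp_all add: I1_def I2_def)
  have k1: "kernel G M h1 = kernel G I1 h1" and k2: "kernel G M h2 = kernel G I2 h2"
    by (simp_all add: kernel_def I1_def I2_def)
  define K1 where "K1 = kernel G I1 h1"
  define K2 where "K2 = kernel G I2 h2"
  have nK1: "K1 \<lhd> G" unfolding K1_def by (rule group_hom.normal_kernel[OF gh1])
  have nK2: "K2 \<lhd> G" unfolding K2_def by (rule group_hom.normal_kernel[OF gh2])
  define N1 where "N1 = h1 ` K2"
  define N2 where "N2 = h2 ` K1"
  have nN1: "N1 \<lhd> I1" unfolding N1_def by (rule normal.surj_hom_normal_subgroup[OF nK2 gh1 s1])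
  have nN2: "N2 \<lhd> I2" unfolding N2_def by (rule normal.surj_hom_normal_subgroup[OF nK1 gh2 s2])
  define \<psi>1 where "\<psi>1 f = N1 #>\<^bsub>I1\<^esub> h1 f" for f
  define \<psi>2 where "\<psi>2 f = N2 #>\<^bsub>I2\<^esub> h2 f" for f
  have gp: "group_hom G (I Mod N) (\<lambda>f. N #>\<^bsub>I\<^esub> h f)" "(\<lambda>f. N #>\<^bsub>I\<^esub> h f) ` carrier G = carrier (I Mod N)"
    if gh: "group_hom G I h" and nN: "N \<lhd> I" and sr: "h ` carrier G = carrier I" for I N h
  proof -
    interpret gh: group_hom G I h by (rule gh)
    interpret N: normal N I by (rule nN)
    have "(\<lambda>f. N #>\<^bsub>I\<^esub> h f) \<in> hom G (I Mod N)"
      unfolding hom_def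
      by (auto simp: FactGroup_def N.rcos_sum intro!: gh.H.rcosetsI N.subset)
    then show "group_hom G (I Mod N) (\<lambda>f. N #>\<^bsub>I\<^esub> h f)"
      unfolding group_hom_def group_hom_axioms_def using G N.factorgroup_is_group by auto
    show "(\<lambda>f. N #>\<^bsub>I\<^esub> h f) ` carrier G = carrier (I Mod N)"
      unfolding carrier_FactGroup sr[symmetric] by (simp add: image_image)
  qed
  have gp1: "group_hom G (I1 Mod N1) \<psi>1" and sp1: "\<psi>1 ` carrier G = carrier (I1 Mod N1)"
    unfolding \<psi>1_def[abs_def] using gp[OF gh1 nN1 s1] by auto
  have gp2: "group_hom G (I2 Mod N2) \<psi>2" and sp2: "\<psi>2 ` carrier G = carrier (I2 Mod N2)"
    unfolding \<psi>2_def[abs_def] using gp[OF gh2 nN2 s2] by auto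
  have K1c: "K1 \<subseteq> carrier G" and K2c: "K2 \<subseteq> carrier G"
    using nK1 nK2 by (auto dest: normal_imp_subgroup subgroup.subset)
  have keq: "kernel G (I1 Mod N1) \<psi>1 = kernel G (I2 Mod N2) \<psi>2"
  proof -
    have "f \<in> kernel G (I1 Mod N1) \<psi>1 \<longleftrightarrow> f \<in> kernel G (I2 Mod N2) \<psi>2" if f: "f \<in> carrier G" for f
    proof -
      have a1: "f \<in> kernel G (I1 Mod N1) \<psi>1 \<longleftrightarrow> \<psi>1 f = N1"
        using f unfolding kernel_def by (simp add: FactGroup_def)
      have "f \<in> kernel G (I1 Mod N1) \<psi>1 \<longleftrightarrow> (\<exists>b\<in>K2. f \<otimes>\<^bsub>G\<^esub> inv\<^bsub>G\<^esub> b \<in> K1)"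
        using ker_char[OF G gh1 s1 nN1[unfolded N1_def] K2c f]
        by (simp only: a1) (simp add: \<psi>1_def N1_def K1_def)
      also have "\<dots> \<longleftrightarrow> (\<exists>a\<in>K1. f \<otimes>\<^bsub>G\<^esub> inv\<^bsub>G\<^esub> a \<in> K2)"
        using normal_swap[OF G nK1 nK2 f] normal_swap[OF G nK2 nK1 f] by blast
      also have "\<dots> \<longleftrightarrow> f \<in> kernel G (I2 Mod N2) \<psi>2"
      proof -
        have a2: "f \<in> kernel G (I2 Mod N2) \<psi>2 \<longleftrightarrow> \<psi>2 f = N2"
          using f unfolding kernel_def by (simp add: FactGroup_def)
        show ?thesis
          using ker_char[OF G gh2 s2 nN2[unfolded N2_def] K1c f]
          by (simp only: a2) (simp add: \<psi>2_def N2_def K2_def)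
      qed
      finally show ?thesis .
    qed
    moreover have "kernel G (I1 Mod N1) \<psi>1 \<subseteq> carrier G" "kernel G (I2 Mod N2) \<psi>2 \<subseteq> carrier G"
      by (auto simp: kernel_def)
    ultimately show ?thesis by blast
  qed
  define K where "K = kernel G (I1 Mod N1) \<psi>1"
  have nK: "K \<lhd> G" unfolding K_def by (rule group_hom.normal_kernel[OF gp1])
  have gK: "group (G Mod K)" by (rule normal.factorgroup_is_group[OF nK])
  define i1 where "i1 X = the_elem (\<psi>1 ` X)" for X
  define i2 where "i2 X = the_elem (\<psi>2 ` X)" for X
  have iso1: "i1 \<in> iso (G Mod K) (I1 Mod N1)"
    unfolding K_def i1_def[abs_def] by (rule group_hom.FactGroup_iso_set[OF gp1 sp1])
  have iso2: "i2 \<in> iso (G Mod K) (I2 Mod N2)"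
    unfolding K_def keq i2_def[abs_def] by (rule group_hom.FactGroup_iso_set[OF gp2 sp2])
  define \<Theta> where "\<Theta> = i2 \<circ> inv_into (carrier (G Mod K)) i1"
  have isoT: "\<Theta> \<in> iso (I1 Mod N1) (I2 Mod N2)"
    unfolding \<Theta>_def by (rule iso_set_trans[OF group.iso_set_sym[OF gK iso1] iso2])
  have formula: "\<Theta> (\<psi>1 f) = \<psi>2 f" if f: "f \<in> carrier G" for f
  proof -
    have mem: "K #>\<^bsub>G\<^esub> f \<in> carrier (G Mod K)"
      using f nK by (auto simp: FactGroup_def intro!: G.rcosetsI dest: normal_imp_subgroup subgroup.subset)
    have e1: "i1 (K #>\<^bsub>G\<^esub> f) = \<psi>1 f"
      unfolding i1_def K_def by (rule the_elem_ker[OF gp1 f])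
    have e2: "i2 (K #>\<^bsub>G\<^esub> f) = \<psi>2 f"
      unfolding i2_def K_def keq by (rule the_elem_ker[OF gp2 f])
    have inj: "inj_on i1 (carrier (G Mod K))" using iso1 by (auto simp: iso_def bij_betw_def)
    have "inv_into (carrier (G Mod K)) i1 (\<psi>1 f) = K #>\<^bsub>G\<^esub> f"
      unfolding e1[symmetric] by (rule inv_into_f_f[OF inj mem])
    then show ?thesis unfolding \<Theta>_def using e2 by simp
  qed
  show ?thesis
    using isoT formula
    unfolding I1_def[symmetric] I2_def[symmetric] k1 k2 K1_def[symmetric] K2_def[symmetric]
      N1_def[symmetric] N2_def[symmetric] \<psi>1_def \<psi>2_def
    by blast
qed



theorem mainTheorem13:
  fixes sc :: "'k::field_char_0 \<Rightarrow> 'h::ring_1 \<Rightarrow> 'h"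
    and cm :: "'h \<Rightarrow> ('h \<times> 'h) list"
    and eps :: "'h \<Rightarrow> 'k"
    and ant B1 B2 :: "'h \<Rightarrow> 'h"
    and scA :: "'k \<Rightarrow> 'a::comm_ring_1 \<Rightarrow> 'a"
  assumes "rb_system sc cm eps ant B1 B2"
    and "comm_algebra scA"
  defines "G \<equiv> CharH_grp sc cm eps scA"
    and "G1 \<equiv> CharH1_grp sc cm eps ant B1 B2 scA"
    and "\<B>1 \<equiv> calB cm ant B1 B2 B1"
    and "\<B>2 \<equiv> calB cm ant B1 B2 B2"
  defines "Im1 \<equiv> G1\<lparr>carrier := \<B>1 ` carrier G\<rparr>"
    and "Im2 \<equiv> G1\<lparr>carrier := \<B>2 ` carrier G\<rparr>"
    and "N1 \<equiv> \<B>1 ` kernel G G1 \<B>2"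
    and "N2 \<equiv> \<B>2 ` kernel G G1 \<B>1"
  shows "\<exists>\<Theta>. \<Theta> \<in> iso (Im1 Mod N1) (Im2 Mod N2) \<and>
              (\<forall>f \<in> carrier G. \<Theta> (N1 #>\<^bsub>Im1\<^esub> \<B>1 f) = N2 #>\<^bsub>Im2\<^esub> \<B>2 f)"
proof -
  have hopf: "cocomm_hopf sc cm eps ant" and cB1: "coalg_hom sc cm eps B1" and cB2: "coalg_hom sc cm eps B2"
    using assms(1) by (auto simp: rb_system_def)
  interpret A: CHA sc cm eps ant scA
    by (simp add: CHA_def CHA_axioms_def CH_def hopf assms(2))
  have gG: "group G" unfolding G_def by (rule A.group_G)
  have mG: "x \<otimes>\<^bsub>G\<^esub> y = A.cv x y" for x y
    by (simp add: G_def CharH_grp_def A.cv_def A.SW_def)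
  have oG: "\<one>\<^bsub>G\<^esub> = A.ee" by (simp add: G_def CharH_grp_def A.ee_def)
  have cG: "carrier G = charH sc scA" by (simp add: G_def CharH_grp_def)
  show ?thesis
    unfolding Im1_def Im2_def N1_def N2_def
  proof (rule main_abstract[OF gG])
    show "\<And>x y. x \<in> carrier G \<Longrightarrow> y \<in> carrier G \<Longrightarrow> \<B>1 (x \<otimes>\<^bsub>G\<^esub> y) = \<B>1 x \<otimes>\<^bsub>G1\<^esub> \<B>1 y"
      unfolding mG cG \<B>1_def G1_def by (rule A.calB_hom[OF cB1 cB2 cB1])
    show "\<And>x y. x \<in> carrier G \<Longrightarrow> y \<in> carrier G \<Longrightarrow> \<B>2 (x \<otimes>\<^bsub>G\<^esub> y) = \<B>2 x \<otimes>\<^bsub>G1\<^esub> \<B>2 y"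
      unfolding mG cG \<B>2_def G1_def by (rule A.calB_hom[OF cB1 cB2 cB2])
    show "\<B>1 \<one>\<^bsub>G\<^esub> = \<one>\<^bsub>G1\<^esub>" unfolding oG \<B>1_def G1_def by (rule A.calB_one[OF cB1])
    show "\<B>2 \<one>\<^bsub>G\<^esub> = \<one>\<^bsub>G1\<^esub>" unfolding oG \<B>2_def G1_def by (rule A.calB_one[OF cB2])
  qed
qed


end
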